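(* Let $\mathcal P$ be a Fitting program over a bilattice $\mathcal B$. Then $Fix^{\mathcal U}_{\mathcal U}\le_k Fix^{\mathcal F}_{\mathcal U}$ and $Fix^{\mathcal U}_{\mathcal U}\le_k Fix^{\mathcal T}_{\mathcal U}$.
   Context: A bilattice $\langle\mathcal B,\le_t,\le_k\rangle$ is a nonempty set with two partial orders, each making $\mathcal B$ a lattice with top and bottom. Under $\le_t$, meet and join are $\wedge,\vee$ (infinitary $\bigwedge,\bigvee$), bottom $\mathcal F$, top $\mathcal T$; under $\le_k$, meet and join are $\otimes,\oplus$ (infinitary $\bigotimes,\bigoplus$), bottom $\mathcal U$, top $\mathcal I$. Standing assumptions: $\mathcal B$ is complete for both orders, infinitely distributive, satisfies the infinitary interlacing conditions, and has a negation $\neg$ (an involution reversing $\le_t$ and preserving $\le_k$). A formula is built from literals ($A$ or $\neg A$) and elements of $\mathcal B$ using $\wedge,\vee,\otimes,\oplus,\exists,\forall$ (with built-in predicate $equal$). A clause is $P(x_1,\dots,x_n)\leftarrow\phi(x_1,\dots,x_n)$ with the body's free variables among $x_1,\dots,x_n$. A Fitting program is a finite set of clauses with no predicate letter heading more than one clause; Inst-$\mathcal P$ is its set of ground instances. $\mathcal V(\mathcal B)$: maps from ground atoms to $\mathcal B$ with pointwise orders/operations. Valuations extend to closed formulas compositionally ($v(\beta)=\beta$, connectives pointwise, $\exists$ as $\bigvee$, $\forall$ as $\bigwedge$ over closed-term instances, $v(equal(s,t))=\mathcal T$ if $s=t$ else $\mathcal F$). The contrajoin $v\bigtriangleup w$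 evaluates likewise but gives $A$ the value $v(A)$ and $\neg A$ the value $\neg w(A)$. For $\alpha\in\{\mathcal F,\mathcal T,\mathcal U,\mathcal I\}$: $\Psi_{\mathcal P}^{\alpha}(v,w)(A)=\alpha$ if $A$ heads no member of Inst-$\mathcal P$, and $=(v\bigtriangleup w)(B)$ if $A\leftarrow B\in$ Inst-$\mathcal P$. $\Psi'^{\alpha}_{\mathcal P}(v)$ is the $\le_t$-least (resp. $\le_t$-greatest, $\le_k$-least, $\le_k$-greatest) fixpoint of $x\mapsto\Psi_{\mathcal P}^{\alpha}(x,v)$ when $\alpha=\mathcal F$ (resp. $\mathcal T,\mathcal U,\mathcal I$), obtained as the limit of the transfinite iteration from the constant valuation $\alpha$. $Fix^{\alpha}_{\mathcal U}$ denotes the $\le_k$-least fixpoint of $\Psi'^{\alpha}_{\mathcal P}$. *)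

theory Defs
  imports Main
begin

text \<open>A bilattice is given by its truth order, knowledge order and negation,
  all on the full type 'b (so the carrier is nonempty).\<close>

record 'b bilat =
  tle :: "'b \<Rightarrow> 'b \<Rightarrow> bool"
  kle :: "'b \<Rightarrow> 'b \<Rightarrow> bool"
  bneg :: "'b \<Rightarrow> 'b"

definition is_lub :: "('b \<Rightarrow> 'b \<Rightarrow> bool) \<Rightarrow> 'b set \<Rightarrow> 'b \<Rightarrow> bool" where
  "is_lub R S x \<longleftrightarrow> (\<forall>a\<in>S. R a x) \<and> (\<forall>y. (\<forall>a\<in>S. R a y) \<longrightarrow> R x y)"

definition is_glb :: "('b \<Rightarrow> 'b \<Rightarrow> bool) \<Rightarrow> 'b set \<Rightarrow> 'b \<Rightarrow> bool" where
  "is_glb R S x \<longleftrightarrow> (\<forall>a\<in>S. R x a) \<and> (\<forall>y. (\<forall>a\<in>S. R y a) \<longrightarrow> R y x)"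

definition lub :: "('b \<Rightarrow> 'b \<Rightarrow> bool) \<Rightarrow> 'b set \<Rightarrow> 'b" where
  "lub R S = (THE x. is_lub R S x)"

definition glb :: "('b \<Rightarrow> 'b \<Rightarrow> bool) \<Rightarrow> 'b set \<Rightarrow> 'b" where
  "glb R S = (THE x. is_glb R S x)"

definition tMeet :: "'b bilat \<Rightarrow> 'b set \<Rightarrow> 'b" where "tMeet B S = glb (tle B) S"
definition tJoin :: "'b bilat \<Rightarrow> 'b set \<Rightarrow> 'b" where "tJoin B S = lub (tle B) S"
definition kMeet :: "'b bilat \<Rightarrow> 'b set \<Rightarrow> 'b" where "kMeet B S = glb (kle B) S"
definition kJoin :: "'b bilat \<Rightarrow> 'b set \<Rightarrow> 'b" where "kJoin B S = lub (kle B) S"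

definition tmeet :: "'b bilat \<Rightarrow> 'b \<Rightarrow> 'b \<Rightarrow> 'b" where "tmeet B a b = tMeet B {a, b}"
definition tjoin :: "'b bilat \<Rightarrow> 'b \<Rightarrow> 'b \<Rightarrow> 'b" where "tjoin B a b = tJoin B {a, b}"
definition kmeet :: "'b bilat \<Rightarrow> 'b \<Rightarrow> 'b \<Rightarrow> 'b" where "kmeet B a b = kMeet B {a, b}"
definition kjoin :: "'b bilat \<Rightarrow> 'b \<Rightarrow> 'b \<Rightarrow> 'b" where "kjoin B a b = kJoin B {a, b}"

definition bF :: "'b bilat \<Rightarrow> 'b" where "bF B = tMeet B UNIV"
definition bT :: "'b bilat \<Rightarrow> 'b" where "bT B = tJoin B UNIV"
definition bU :: "'b bilat \<Rightarrow> 'b" where "bU B = kMeet B UNIV"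
definition bI :: "'b bilat \<Rightarrow> 'b" where "bI B = kJoin B UNIV"

definition partial_order_rel :: "('b \<Rightarrow> 'b \<Rightarrow> bool) \<Rightarrow> bool" where
  "partial_order_rel R \<longleftrightarrow> (\<forall>a. R a a) \<and> (\<forall>a b. R a b \<longrightarrow> R b a \<longrightarrow> a = b)
     \<and> (\<forall>a b c. R a b \<longrightarrow> R b c \<longrightarrow> R a c)"

definition complete_rel :: "('b \<Rightarrow> 'b \<Rightarrow> bool) \<Rightarrow> bool" where
  "complete_rel R \<longleftrightarrow> (\<forall>S. (\<exists>x. is_lub R S x) \<and> (\<exists>x. is_glb R S x))"

definition inf_distributive :: "'b bilat \<Rightarrow> bool" where
  "inf_distributive B \<longleftrightarrow>
     (\<forall>bop \<in> {tmeet B, tjoin B, kmeet B, kjoin B}.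
      \<forall>Op \<in> {tMeet B, tJoin B, kMeet B, kJoin B}.
      \<forall>a S. S \<noteq> {} \<longrightarrow> bop a (Op S) = Op (bop a ` S))"

text \<open>An indexed family of pairs
  (a_i, b_i) is represented by the set of pairs P.\<close>
definition inf_interlaced :: "'b bilat \<Rightarrow> bool" where
  "inf_interlaced B \<longleftrightarrow>
     (\<forall>P :: ('b \<times> 'b) set. (\<forall>(a, b) \<in> P. kle B a b) \<longrightarrow>
         kle B (tMeet B (fst ` P)) (tMeet B (snd ` P)) \<and>
         kle B (tJoin B (fst ` P)) (tJoin B (snd ` P))) \<and>
     (\<forall>P :: ('b \<times> 'b) set. (\<forall>(a, b) \<in> P. tle B a b) \<longrightarrow>
         tle B (kMeet B (fst ` P)) (kMeet B (snd ` P)) \<and>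
         tle B (kJoin B (fst ` P)) (kJoin B (snd ` P)))"

definition is_negation :: "'b bilat \<Rightarrow> bool" where
  "is_negation B \<longleftrightarrow> (\<forall>a. bneg B (bneg B a) = a)
     \<and> (\<forall>a b. tle B a b \<longrightarrow> tle B (bneg B b) (bneg B a))
     \<and> (\<forall>a b. kle B a b \<longrightarrow> kle B (bneg B a) (bneg B b))"

definition bilattice :: "'b bilat \<Rightarrow> bool" where
  "bilattice B \<longleftrightarrow> partial_order_rel (tle B) \<and> partial_order_rel (kle B)
     \<and> complete_rel (tle B) \<and> complete_rel (kle B)
     \<and> inf_distributive B \<and> inf_interlaced B \<and> is_negation B"

datatype ('f, 'v) trm = Var 'v | Fn 'f "('f, 'v) trm list"

datatype 'f gterm = GFn 'f "'f gterm list"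

datatype ('p, 'f, 'v, 'b) fml =
    Pos 'p "('f, 'v) trm list"
  | Neg 'p "('f, 'v) trm list"
  | Equal "('f, 'v) trm" "('f, 'v) trm"
  | NEqual "('f, 'v) trm" "('f, 'v) trm"
  | Cst 'b
  | Conj "('p, 'f, 'v, 'b) fml" "('p, 'f, 'v, 'b) fml"
  | Disj "('p, 'f, 'v, 'b) fml" "('p, 'f, 'v, 'b) fml"
  | KMeet "('p, 'f, 'v, 'b) fml" "('p, 'f, 'v, 'b) fml"
  | KJoin "('p, 'f, 'v, 'b) fml" "('p, 'f, 'v, 'b) fml"
  | Ex 'v "('p, 'f, 'v, 'b) fml"
  | All 'v "('p, 'f, 'v, 'b) fml"

fun tvars :: "('f, 'v) trm \<Rightarrow> 'v set" where
  "tvars (Var x) = {x}"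
| "tvars (Fn f ts) = (\<Union>t\<in>set ts. tvars t)"

fun fv :: "('p, 'f, 'v, 'b) fml \<Rightarrow> 'v set" where
  "fv (Pos p ts) = (\<Union>t\<in>set ts. tvars t)"
| "fv (Neg p ts) = (\<Union>t\<in>set ts. tvars t)"
| "fv (Equal s t) = tvars s \<union> tvars t"
| "fv (NEqual s t) = tvars s \<union> tvars t"
| "fv (Cst b) = {}"
| "fv (Conj a b) = fv a \<union> fv b"
| "fv (Disj a b) = fv a \<union> fv b"
| "fv (KMeet a b) = fv a \<union> fv b"
| "fv (KJoin a b) = fv a \<union> fv b"
| "fv (Ex x a) = fv a - {x}"
| "fv (All x a) = fv a - {x}"

text \<open>A clause P(x1,...,xn) <- phi is represented as (P, [x1,...,xn], phi).\<close>
type_synonym ('p, 'f, 'v, 'b) clause = "'p \<times> 'v list \<times> ('p, 'f, 'v, 'b) fml"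
type_synonym ('p, 'f, 'v, 'b) prog = "('p, 'f, 'v, 'b) clause set"

definition fitting_program :: "('p, 'f, 'v, 'b) prog \<Rightarrow> bool" where
  "fitting_program P \<longleftrightarrow> finite P
     \<and> (\<forall>(p, xs, \<phi>) \<in> P. distinct xs \<and> fv \<phi> \<subseteq> set xs)
     \<and> (\<forall>c1\<in>P. \<forall>c2\<in>P. fst c1 = fst c2 \<longrightarrow> c1 = c2)"

type_synonym ('p, 'f) gatom = "'p \<times> 'f gterm list"
type_synonym ('p, 'f, 'b) valuation = "('p, 'f) gatom \<Rightarrow> 'b"

definition vtle :: "'b bilat \<Rightarrow> ('p, 'f, 'b) valuation \<Rightarrow> ('p, 'f, 'b) valuation \<Rightarrow> bool" where
  "vtle B v w \<longleftrightarrow> (\<forall>A. tle B (v A) (w A))"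

definition vkle :: "'b bilat \<Rightarrow> ('p, 'f, 'b) valuation \<Rightarrow> ('p, 'f, 'b) valuation \<Rightarrow> bool" where
  "vkle B v w \<longleftrightarrow> (\<forall>A. kle B (v A) (w A))"

fun ginst :: "('v \<Rightarrow> 'f gterm) \<Rightarrow> ('f, 'v) trm \<Rightarrow> 'f gterm" where
  "ginst e (Var x) = e x"
| "ginst e (Fn f ts) = GFn f (map (ginst e) ts)"

text \<open>Contrajoin evaluation (v \<triangle> w)(phi e) of the ground instance of phi under the
  ground substitution e (e matters only on the free variables of phi).\<close>
fun cj_eval :: "'b bilat \<Rightarrow> ('p, 'f, 'b) valuation \<Rightarrow> ('p, 'f, 'b) valuation
      \<Rightarrow> ('v \<Rightarrow> 'f gterm) \<Rightarrow> ('p, 'f, 'v, 'b) fml \<Rightarrow> 'b" where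
  "cj_eval B v w e (Pos p ts) = v (p, map (ginst e) ts)"
| "cj_eval B v w e (Neg p ts) = bneg B (w (p, map (ginst e) ts))"
| "cj_eval B v w e (Equal s t) = (if ginst e s = ginst e t then bT B else bF B)"
| "cj_eval B v w e (NEqual s t) = bneg B (if ginst e s = ginst e t then bT B else bF B)"
| "cj_eval B v w e (Cst b) = b"
| "cj_eval B v w e (Conj a b) = tmeet B (cj_eval B v w e a) (cj_eval B v w e b)"
| "cj_eval B v w e (Disj a b) = tjoin B (cj_eval B v w e a) (cj_eval B v w e b)"
| "cj_eval B v w e (KMeet a b) = kmeet B (cj_eval B v w e a) (cj_eval B v w e b)"
| "cj_eval B v w e (KJoin a b) = kjoin B (cj_eval B v w e a) (cj_eval B v w e b)"
| "cj_eval B v w e (Ex x a) = tJoin B {cj_eval B v w (e(x := t)) a | t. True}"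
| "cj_eval B v w e (All x a) = tMeet B {cj_eval B v w (e(x := t)) a | t. True}"

datatype dflt = DF | DT | DU | DI

fun dval :: "'b bilat \<Rightarrow> dflt \<Rightarrow> 'b" where
  "dval B DF = bF B" | "dval B DT = bT B" | "dval B DU = bU B" | "dval B DI = bI B"

text \<open>A ground atom A heads a member of Inst-P iff A = p(e x1,...,e xn) for a clause
  (p,[x1..xn],phi) in P and a ground substitution e; the body of that ground
  instance is phi instantiated by e.\<close>
definition Psi :: "'b bilat \<Rightarrow> dflt \<Rightarrow> ('p, 'f, 'v, 'b) prog
      \<Rightarrow> ('p, 'f, 'b) valuation \<Rightarrow> ('p, 'f, 'b) valuation \<Rightarrow> ('p, 'f, 'b) valuation" where
  "Psi B \<alpha> P v w A =
     (if \<exists>(p, xs, \<phi>) \<in> P. \<exists>e. A = (p, map e xs)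
      then (THE b. \<exists>(p, xs, \<phi>) \<in> P. \<exists>e. A = (p, map e xs) \<and> b = cj_eval B v w e \<phi>)
      else dval B \<alpha>)"

definition least_fp :: "('a \<Rightarrow> 'a \<Rightarrow> bool) \<Rightarrow> ('a \<Rightarrow> 'a) \<Rightarrow> 'a" where
  "least_fp R f = (THE x. f x = x \<and> (\<forall>y. f y = y \<longrightarrow> R x y))"

definition greatest_fp :: "('a \<Rightarrow> 'a \<Rightarrow> bool) \<Rightarrow> ('a \<Rightarrow> 'a) \<Rightarrow> 'a" where
  "greatest_fp R f = (THE x. f x = x \<and> (\<forall>y. f y = y \<longrightarrow> R y x))"

fun Psi' :: "'b bilat \<Rightarrow> dflt \<Rightarrow> ('p, 'f, 'v, 'b) prog
      \<Rightarrow> ('p, 'f, 'b) valuation \<Rightarrow> ('p, 'f, 'b) valuation" where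
  "Psi' B DF P v = least_fp (vtle B) (\<lambda>x. Psi B DF P x v)"
| "Psi' B DT P v = greatest_fp (vtle B) (\<lambda>x. Psi B DT P x v)"
| "Psi' B DU P v = least_fp (vkle B) (\<lambda>x. Psi B DU P x v)"
| "Psi' B DI P v = greatest_fp (vkle B) (\<lambda>x. Psi B DI P x v)"

definition FixU :: "'b bilat \<Rightarrow> dflt \<Rightarrow> ('p, 'f, 'v, 'b) prog \<Rightarrow> ('p, 'f, 'b) valuation" where
  "FixU B \<alpha> P = least_fp (vkle B) (Psi' B \<alpha> P)"

end

theory Submission
  imports Defs
begin

section \<open>Abstract order theory\<close>

lemma po_refl: "partial_order_rel R \<Longrightarrow> R x x"
  unfolding partial_order_rel_def by simp

lemma po_trans: "partial_order_rel R \<Longrightarrow> R x y \<Longrightarrow> R y z \<Longrightarrow> R x z"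
  unfolding partial_order_rel_def by (elim conjE allE impE) 

lemma po_anti: "partial_order_rel R \<Longrightarrow> R x y \<Longrightarrow> R y x \<Longrightarrow> x = y"
  unfolding partial_order_rel_def by (elim conjE allE impE)

lemma lub_unique:
  assumes "partial_order_rel R" "is_lub R S x" "is_lub R S y" shows "x = y"
proof -
  have "R x y" "R y x" using assms(2,3) unfolding is_lub_def by blast+
  then show ?thesis using po_anti[OF assms(1)] by simp
qed

lemma glb_unique:
  assumes "partial_order_rel R" "is_glb R S x" "is_glb R S y" shows "x = y"
proof -
  have "R x y" "R y x" using assms(2,3) unfolding is_glb_def by blast+
  then show ?thesis using po_anti[OF assms(1)] by simp
qed

lemma lub_is:
  assumes "partial_order_rel R" "complete_rel R" shows "is_lub R S (lub R S)"
proof -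
  obtain x where x: "is_lub R S x" using assms(2) unfolding complete_rel_def by blast
  have "\<exists>!x. is_lub R S x" using x lub_unique[OF assms(1)] by blast
  then show ?thesis unfolding lub_def by (rule theI')
qed

lemma glb_is:
  assumes "partial_order_rel R" "complete_rel R" shows "is_glb R S (glb R S)"
proof -
  obtain x where x: "is_glb R S x" using assms(2) unfolding complete_rel_def by blast
  have "\<exists>!x. is_glb R S x" using x glb_unique[OF assms(1)] by blast
  then show ?thesis unfolding glb_def by (rule theI')
qed

lemma is_lub_flip: "is_lub (\<lambda>a b. R b a) S x = is_glb R S x"
  by (simp add: is_lub_def is_glb_def)

lemma is_glb_flip: "is_glb (\<lambda>a b. R b a) S x = is_lub R S x"
  by (simp add: is_lub_def is_glb_def)

lemma po_flip: assumes po: "partial_order_rel R" shows "partial_order_rel (\<lambda>a b. R b a)"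
  unfolding partial_order_rel_def
proof (intro conjI allI impI)
  fix a show "R a a" by (rule po_refl[OF po])
next
  fix a b assume "R b a" "R a b" then show "a = b" using po_anti[OF po] by blast
next
  fix a b c assume "R b a" "R c b" then show "R c a" using po_trans[OF po] by blast
qed

lemma complete_flip: "complete_rel R \<Longrightarrow> complete_rel (\<lambda>a b. R b a)"
  unfolding complete_rel_def is_lub_def is_glb_def by blast

lemma lub_mono_pairs:
  assumes "partial_order_rel R" "\<forall>(a,b)\<in>P. R a b" "is_lub R (fst`P) x" "is_lub R (snd`P) y"
  shows "R x y"
proof -
  have "\<forall>a\<in>fst`P. R a y"
  proof
    fix a assume "a \<in> fst`P"
    then obtain b where ab: "(a,b)\<in>P" by force
    then have "R a b" using assms(2) by blast
    moreover have "R b y" using assms(4) ab unfolding is_lub_def by force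
    ultimately show "R a y" by (rule po_trans[OF assms(1)])
  qed
  then show ?thesis using assms(3) unfolding is_lub_def by blast
qed

lemma glb_mono_pairs:
  assumes "partial_order_rel R" "\<forall>(a,b)\<in>P. R a b" "is_glb R (fst`P) x" "is_glb R (snd`P) y"
  shows "R x y"
proof -
  have "\<forall>b\<in>snd`P. R x b"
  proof
    fix b assume "b \<in> snd`P"
    then obtain a where ab: "(a,b)\<in>P" by force
    then have "R a b" using assms(2) by blast
    moreover have "R x a" using assms(3) ab unfolding is_glb_def by force
    ultimately show "R x b" using po_trans[OF assms(1)] by blast
  qed
  then show ?thesis using assms(4) unfolding is_glb_def by blast
qed

lemma KT:
  assumes po: "partial_order_rel R" and cR: "complete_rel R"
    and mf: "\<And>x y. R x y \<Longrightarrow> R (f x) (f y)"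
  shows "f (least_fp R f) = least_fp R f \<and> (\<forall>y. R (f y) y \<longrightarrow> R (least_fp R f) y)"
proof -
  define S where "S = {y. R (f y) y}"
  define a where "a = glb R S"
  have ga: "is_glb R S a" unfolding a_def by (rule glb_is[OF po cR])
  note refl = po_refl[OF po] and trans = po_trans[OF po] and anti = po_anti[OF po]
  have low: "\<And>y. y \<in> S \<Longrightarrow> R a y" using ga unfolding is_glb_def by blast
  have "\<And>y. y \<in> S \<Longrightarrow> R (f a) y"
  proof -
    fix y assume y: "y \<in> S"
    have "R (f a) (f y)" using mf low[OF y] .
    moreover have "R (f y) y" using y unfolding S_def by simp
    ultimately show "R (f a) y" by (rule trans)
  qed
  then have fa: "R (f a) a" using ga unfolding is_glb_def by blast
  then have "f a \<in> S" unfolding S_def using mf by blast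
  then have "R a (f a)" using low by blast
  with fa have fx: "f a = a" using anti by blast
  have least: "\<forall>y. R (f y) y \<longrightarrow> R a y" using low unfolding S_def by blast
  have afix: "f a = a \<and> (\<forall>y. f y = y \<longrightarrow> R a y)"
  proof (intro conjI allI impI)
    show "f a = a" by (rule fx)
  next
    fix y assume "f y = y"
    then have "R (f y) y" using refl by simp
    then show "R a y" using least by blast
  qed
  have uniq: "x = a" if hx: "f x = x \<and> (\<forall>y. f y = y \<longrightarrow> R x y)" for x
  proof -
    have "R x a" using hx fx by blast
    moreover have "R (f x) x" using hx refl by simp
    then have "R a x" using least by blast
    ultimately show "x = a" using anti by blast
  qed
  have "least_fp R f = a" unfolding least_fp_def
    by (rule the_equality, rule afix, erule uniq)
  then show ?thesis using fx least by simp
qed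

inductive_set pairQ :: "('a\<Rightarrow>'a\<Rightarrow>bool) \<Rightarrow> ('a\<Rightarrow>'a) \<Rightarrow> ('a\<Rightarrow>'a) \<Rightarrow> ('a\<times>'a) set"
  for R f g where
  step: "(x,y) \<in> pairQ R f g \<Longrightarrow> (f x, g y) \<in> pairQ R f g"
| lim: "\<forall>p\<in>S. p \<in> pairQ R f g \<Longrightarrow> is_lub R (fst`S) x \<Longrightarrow> is_lub R (snd`S) y
        \<Longrightarrow> (x,y) \<in> pairQ R f g"

definition supmono :: "('a\<Rightarrow>'a\<Rightarrow>bool) \<Rightarrow> ('a\<Rightarrow>'a\<Rightarrow>bool) \<Rightarrow> bool" where
  "supmono R K \<longleftrightarrow> (\<forall>S. (\<forall>(a,b)\<in>S. K a b) \<longrightarrow>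
      (\<forall>x y. is_lub R (fst`S) x \<longrightarrow> is_lub R (snd`S) y \<longrightarrow> K x y))"

lemma lfp_pair:
  assumes po: "partial_order_rel R" and cR: "complete_rel R"
    and sm: "supmono R K"
    and mf: "\<And>x y. R x y \<Longrightarrow> R (f x) (f y)"
    and mg: "\<And>x y. R x y \<Longrightarrow> R (g x) (g y)"
    and fg: "\<And>x y. K x y \<Longrightarrow> K (f x) (g y)"
  shows "K (least_fp R f) (least_fp R g)"
proof -
  define a0 where "a0 = least_fp R f"
  define b0 where "b0 = least_fp R g"
  have A: "f a0 = a0" "\<forall>y. R (f y) y \<longrightarrow> R a0 y" using KT[OF po cR, of f, OF mf] unfolding a0_def by simp_all
  have Bb: "g b0 = b0" "\<forall>y. R (g y) y \<longrightarrow> R b0 y" using KT[OF po cR, of g, OF mg] unfolding b0_def by simp_all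
  note trans = po_trans[OF po] and anti = po_anti[OF po]
  have inv1: "K (fst p) (snd p)" if "p \<in> pairQ R f g" for p
    using that
  proof (induction p rule: pairQ.induct)
    case (step x y) then show ?case by (simp add: fg)
  next
    case (lim S x y)
    have "\<forall>(a,b)\<in>S. K a b" using lim(1) by auto
    then show ?case using sm lim(2,3) unfolding supmono_def fst_conv snd_conv by blast
  qed
  have inv2: "R (fst p) a0 \<and> R (snd p) b0" if "p \<in> pairQ R f g" for p
    using that
  proof (induction p rule: pairQ.induct)
    case (step x y)
    then have "R x a0" "R y b0" by simp_all
    then have "R (f x) (f a0)" "R (g y) (g b0)" using mf mg by blast+
    then show ?case using A Bb by simp
  next
    case (lim S x y)
    have "\<forall>a\<in>fst`S. R a a0" using lim(1) by force
    then have "R x a0" using lim(2) unfolding is_lub_def by blast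
    moreover have "\<forall>a\<in>snd`S. R a b0" using lim(1) by force
    then have "R y b0" using lim(3) unfolding is_lub_def by blast
    ultimately show ?case by simp
  qed
  define Q where "Q = pairQ R f g"
  define x where "x = lub R (fst`Q)"
  define y where "y = lub R (snd`Q)"
  have lx: "is_lub R (fst`Q) x" unfolding x_def by (rule lub_is[OF po cR])
  have ly: "is_lub R (snd`Q) y" unfolding y_def by (rule lub_is[OF po cR])
  have xy: "(x,y) \<in> Q" unfolding Q_def by (rule pairQ.lim[OF _ lx[unfolded Q_def] ly[unfolded Q_def]]) simp
  then have fgQ: "(f x, g y) \<in> Q" unfolding Q_def by (rule pairQ.step)
  then have "f x \<in> fst`Q" "g y \<in> snd`Q" by (simp_all add: rev_image_eqI)
  moreover have "\<forall>a\<in>fst`Q. R a x" "\<forall>a\<in>snd`Q. R a y" using lx ly unfolding is_lub_def by blast+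
  ultimately have "R (f x) x" "R (g y) y" by blast+
  then have h1: "R a0 x" "R b0 y" using A(2) Bb(2) by simp_all
  have h2: "R x a0" "R y b0" using inv2[OF xy[unfolded Q_def]] by simp_all
  have "x = a0" by (rule anti[OF h2(1) h1(1)])
  moreover have "y = b0" by (rule anti[OF h2(2) h1(2)])
  moreover have "K x y" using inv1[OF xy[unfolded Q_def]] by simp
  ultimately show ?thesis unfolding a0_def[symmetric] b0_def[symmetric] by (simp only:)
qed

section \<open>Bilattice facts\<close>

lemma bl:
  assumes "bilattice B"
  shows "partial_order_rel (tle B)" "partial_order_rel (kle B)" "complete_rel (tle B)"
    "complete_rel (kle B)" "inf_interlaced B" "is_negation B"
  using assms unfolding bilattice_def by simp_all

lemma lub_eq: "partial_order_rel R \<Longrightarrow> complete_rel R \<Longrightarrow> is_lub R S x \<Longrightarrow> lub R S = x"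
  using lub_unique lub_is by metis

lemma glb_eq: "partial_order_rel R \<Longrightarrow> complete_rel R \<Longrightarrow> is_glb R S x \<Longrightarrow> glb R S = x"
  using glb_unique glb_is by metis

lemma lub_pairs_mono:
  assumes "partial_order_rel R" "complete_rel R" "\<forall>(a,b)\<in>P. R a b"
  shows "R (lub R (fst`P)) (lub R (snd`P))"
  by (rule lub_mono_pairs[OF assms(1,3) lub_is[OF assms(1,2)] lub_is[OF assms(1,2)]])

lemma glb_pairs_mono:
  assumes "partial_order_rel R" "complete_rel R" "\<forall>(a,b)\<in>P. R a b"
  shows "R (glb R (fst`P)) (glb R (snd`P))"
  by (rule glb_mono_pairs[OF assms(1,3) glb_is[OF assms(1,2)] glb_is[OF assms(1,2)]])

definition opsmono :: "('b \<Rightarrow> 'b \<Rightarrow> bool) \<Rightarrow> 'b bilat \<Rightarrow> bool" where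
  "opsmono R B \<longleftrightarrow> (\<forall>P. (\<forall>(a,b)\<in>P. R a b) \<longrightarrow>
     R (tJoin B (fst`P)) (tJoin B (snd`P)) \<and> R (tMeet B (fst`P)) (tMeet B (snd`P)) \<and>
     R (kJoin B (fst`P)) (kJoin B (snd`P)) \<and> R (kMeet B (fst`P)) (kMeet B (snd`P)))"

lemma opsmono_t: assumes "bilattice B" shows "opsmono (tle B) B"
  unfolding opsmono_def
proof (intro allI impI conjI)
  fix P assume h: "\<forall>(a,b)\<in>P. tle B a b"
  show "tle B (tJoin B (fst`P)) (tJoin B (snd`P))" unfolding tJoin_def
    by (rule lub_pairs_mono[OF bl(1,3)[OF assms] h])
  show "tle B (tMeet B (fst`P)) (tMeet B (snd`P))" unfolding tMeet_def
    by (rule glb_pairs_mono[OF bl(1,3)[OF assms] h])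
  show "tle B (kJoin B (fst`P)) (kJoin B (snd`P))" "tle B (kMeet B (fst`P)) (kMeet B (snd`P))"
    using bl(5)[OF assms] h unfolding inf_interlaced_def by blast+
qed

lemma opsmono_k: assumes "bilattice B" shows "opsmono (kle B) B"
  unfolding opsmono_def
proof (intro allI impI conjI)
  fix P assume h: "\<forall>(a,b)\<in>P. kle B a b"
  show "kle B (kJoin B (fst`P)) (kJoin B (snd`P))" unfolding kJoin_def
    by (rule lub_pairs_mono[OF bl(2,4)[OF assms] h])
  show "kle B (kMeet B (fst`P)) (kMeet B (snd`P))" unfolding kMeet_def
    by (rule glb_pairs_mono[OF bl(2,4)[OF assms] h])
  show "kle B (tJoin B (fst`P)) (tJoin B (snd`P))" "kle B (tMeet B (fst`P)) (tMeet B (snd`P))"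
    using bl(5)[OF assms] h unfolding inf_interlaced_def by blast+
qed

lemma opsmono_flip:
  assumes om: "opsmono R B" shows "opsmono (\<lambda>a b. R b a) B"
  unfolding opsmono_def
proof (intro allI impI)
  fix P assume h: "\<forall>(a,b)\<in>P. R b a"
  define P' where "P' = prod.swap ` P"
  have "\<forall>(a,b)\<in>P'. R a b" using h unfolding P'_def by auto
  moreover have "fst ` P' = snd ` P" "snd ` P' = fst ` P" unfolding P'_def image_image by simp_all
  ultimately show "R (tJoin B (snd`P)) (tJoin B (fst`P)) \<and> R (tMeet B (snd`P)) (tMeet B (fst`P)) \<and>
     R (kJoin B (snd`P)) (kJoin B (fst`P)) \<and> R (kMeet B (snd`P)) (kMeet B (fst`P))"
    using om unfolding opsmono_def by metis
qed

lemma opsmono_bin: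
  assumes om: "opsmono R B" and h: "R a a'" "R b b'"
  shows "R (tmeet B a b) (tmeet B a' b')" "R (tjoin B a b) (tjoin B a' b')"
    "R (kmeet B a b) (kmeet B a' b')" "R (kjoin B a b) (kjoin B a' b')"
proof -
  define P where "P = {(a,a'),(b,b')}"
  have "\<forall>(x,y)\<in>P. R x y" using h unfolding P_def by simp
  moreover have "fst`P = {a,b}" "snd`P = {a',b'}" unfolding P_def by simp_all
  ultimately show "R (tmeet B a b) (tmeet B a' b')" "R (tjoin B a b) (tjoin B a' b')"
    "R (kmeet B a b) (kmeet B a' b')" "R (kjoin B a b) (kjoin B a' b')"
    using om unfolding opsmono_def tmeet_def tjoin_def kmeet_def kjoin_def by metis+
qed

lemma opsmono_fam:
  assumes om: "opsmono R B" and h: "\<And>t. R (f t) (g t)"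
  shows "R (tJoin B {f t|t. True}) (tJoin B {g t|t. True})"
    "R (tMeet B {f t|t. True}) (tMeet B {g t|t. True})"
proof -
  define P where "P = range (\<lambda>t. (f t, g t))"
  have "\<forall>(x,y)\<in>P. R x y" using h unfolding P_def by auto
  moreover have "fst`P = {f t|t. True}" "snd`P = {g t|t. True}" unfolding P_def image_image by auto
  ultimately show "R (tJoin B {f t|t. True}) (tJoin B {g t|t. True})"
    "R (tMeet B {f t|t. True}) (tMeet B {g t|t. True})"
    using om unfolding opsmono_def by metis+
qed

lemma cj_mono_gen:
  assumes om: "opsmono R B" and rf: "\<And>a. R a a" and hv: "\<And>A. R (v A) (v' A)"
    and hw: "\<And>A. R (bneg B (w A)) (bneg B (w' A))"
  shows "R (cj_eval B v w e \<phi>) (cj_eval B v' w' e \<phi>)"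
proof (induction \<phi> arbitrary: e)
  case (Conj a b) then show ?case using opsmono_bin[OF om] by simp
next
  case (Disj a b) then show ?case using opsmono_bin[OF om] by simp
next
  case (KMeet a b) then show ?case using opsmono_bin[OF om] by simp
next
  case (KJoin a b) then show ?case using opsmono_bin[OF om] by simp
next
  case (Ex x a) then show ?case
    using opsmono_fam(1)[OF om, of "\<lambda>t. cj_eval B v w (e(x:=t)) a" "\<lambda>t. cj_eval B v' w' (e(x:=t)) a"]
    by simp
next
  case (All x a) then show ?case
    using opsmono_fam(2)[OF om, of "\<lambda>t. cj_eval B v w (e(x:=t)) a" "\<lambda>t. cj_eval B v' w' (e(x:=t)) a"]
    by simp
qed (simp_all add: rf hv hw)

lemma ginst_cong: "(\<forall>x\<in>tvars t. e x = e' x) \<Longrightarrow> ginst e t = ginst e' t"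
  by (induction t) auto

lemma cj_cong: "(\<forall>x\<in>fv \<phi>. e x = e' x) \<Longrightarrow> cj_eval B v w e \<phi> = cj_eval B v w e' \<phi>"
proof (induction \<phi> arbitrary: e e')
  case (Pos p ts)
  then have "map (ginst e) ts = map (ginst e') ts" using ginst_cong by fastforce
  then show ?case by (simp only: cj_eval.simps)
next
  case (Neg p ts)
  then have "map (ginst e) ts = map (ginst e') ts" using ginst_cong by fastforce
  then show ?case by (simp only: cj_eval.simps)
next
  case (Equal s t)
  then have "ginst e s = ginst e' s" "ginst e t = ginst e' t"
    using ginst_cong[of s e e'] ginst_cong[of t e e'] by auto
  then show ?case by simp
next
  case (NEqual s t)
  then have "ginst e s = ginst e' s" "ginst e t = ginst e' t"
    using ginst_cong[of s e e'] ginst_cong[of t e e'] by auto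
  then show ?case by simp
next
  case (Ex x a)
  have "\<And>t. cj_eval B v w (e(x:=t)) a = cj_eval B v w (e'(x:=t)) a"
    using Ex.IH Ex.prems by simp
  then show ?case by simp
next
  case (All x a)
  have "\<And>t. cj_eval B v w (e(x:=t)) a = cj_eval B v w (e'(x:=t)) a"
    using All.IH All.prems by simp
  then show ?case by simp
next
  case (Conj a b)
  then have "cj_eval B v w e a = cj_eval B v w e' a" "cj_eval B v w e b = cj_eval B v w e' b" by simp_all
  then show ?case by simp
next
  case (Disj a b)
  then have "cj_eval B v w e a = cj_eval B v w e' a" "cj_eval B v w e b = cj_eval B v w e' b" by simp_all
  then show ?case by simp
next
  case (KMeet a b)
  then have "cj_eval B v w e a = cj_eval B v w e' a" "cj_eval B v w e b = cj_eval B v w e' b" by simp_all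
  then show ?case by simp
next
  case (KJoin a b)
  then have "cj_eval B v w e a = cj_eval B v w e' a" "cj_eval B v w e b = cj_eval B v w e' b" by simp_all
  then show ?case by simp
qed auto

lemma Psi_eval:
  assumes fp: "fitting_program P" and c: "(p, xs, \<phi>) \<in> P"
  shows "Psi B \<alpha> P v w (p, map e xs) = cj_eval B v w e \<phi>"
proof -
  have cond: "\<exists>(p', xs', \<phi>') \<in> P. \<exists>e'. (p, map e xs) = (p', map e' xs')" using c by blast
  have "(THE b. \<exists>(p', xs', \<phi>') \<in> P. \<exists>e'. (p, map e xs) = (p', map e' xs') \<and> b = cj_eval B v w e' \<phi>')
        = cj_eval B v w e \<phi>"
  proof (rule the_equality)
    show "\<exists>(p', xs', \<phi>') \<in> P. \<exists>e'. (p, map e xs) = (p', map e' xs') \<and> cj_eval B v w e \<phi> = cj_eval B v w e' \<phi>'"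
      using c by blast
  next
    fix b assume "\<exists>(p', xs', \<phi>') \<in> P. \<exists>e'. (p, map e xs) = (p', map e' xs') \<and> b = cj_eval B v w e' \<phi>'"
    then obtain p' xs' \<phi>' e' where c': "(p', xs', \<phi>') \<in> P" and eq: "(p, map e xs) = (p', map e' xs')"
      and b: "b = cj_eval B v w e' \<phi>'" by blast
    have "p' = p" using eq by simp
    then have "(p', xs', \<phi>') = (p, xs, \<phi>)" using fp c c' unfolding fitting_program_def by fastforce
    then have x: "xs' = xs" "\<phi>' = \<phi>" by simp_all
    have "map e xs = map e' xs" using eq x by simp
    then have "\<forall>x\<in>set xs. e x = e' x" by (simp add: map_eq_conv)
    moreover have "fv \<phi> \<subseteq> set xs" using fp c unfolding fitting_program_def by fastforce
    ultimately have "\<forall>x\<in>fv \<phi>. e' x = e x" by auto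
    then show "b = cj_eval B v w e \<phi>" using b x cj_cong by metis
  qed
  then show ?thesis unfolding Psi_def using cond by simp
qed

lemma Psi_rel:
  fixes P :: "('p, 'f, 'v, 'b) prog"
  assumes fp: "fitting_program P"
    and hc: "\<And>(e :: 'v \<Rightarrow> 'f gterm) (\<phi> :: ('p, 'f, 'v, 'b) fml). R (cj_eval B v w e \<phi>) (cj_eval B v' w' e \<phi>)"
    and hd: "R (dval B \<alpha>) (dval B \<alpha>')"
  shows "R (Psi B \<alpha> P v w A) (Psi B \<alpha>' P v' w' A)"
proof (cases "\<exists>(p, xs, \<phi>) \<in> P. \<exists>e. A = (p, map e xs)")
  case True
  then obtain p xs \<phi> e where c: "(p, xs, \<phi>) \<in> P" and A: "A = (p, map e xs)" by blast
  show ?thesis unfolding A Psi_eval[OF fp c] by (rule hc)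
next
  case False
  then show ?thesis unfolding Psi_def using hd by simp
qed

section \<open>Pointwise orders on valuations\<close>

definition pw :: "('b \<Rightarrow> 'b \<Rightarrow> bool) \<Rightarrow> ('a \<Rightarrow> 'b) \<Rightarrow> ('a \<Rightarrow> 'b) \<Rightarrow> bool" where
  "pw R v w \<longleftrightarrow> (\<forall>A. R (v A) (w A))"

lemma vtle_pw: "vtle B = pw (tle B)" by (simp add: fun_eq_iff vtle_def pw_def)
lemma vkle_pw: "vkle B = pw (kle B)" by (simp add: fun_eq_iff vkle_def pw_def)

lemma pw_po: fixes R :: "'b \<Rightarrow> 'b \<Rightarrow> bool" assumes po: "partial_order_rel R" shows "partial_order_rel (pw R)"
  unfolding partial_order_rel_def
proof (intro conjI allI impI)
  fix a :: "'a \<Rightarrow> 'b" show "pw R a a" unfolding pw_def using po_refl[OF po] by simp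
next
  fix a b :: "'a \<Rightarrow> 'b" assume "pw R a b" "pw R b a"
  then show "a = b" unfolding pw_def using po_anti[OF po] by (simp add: fun_eq_iff)
next
  fix a b c :: "'a \<Rightarrow> 'b" assume h: "pw R a b" "pw R b c"
  show "pw R a c" unfolding pw_def
  proof
    fix A
    have "R (a A) (b A)" "R (b A) (c A)" using h unfolding pw_def by simp_all
    then show "R (a A) (c A)" by (rule po_trans[OF po])
  qed
qed

lemma pw_lub_intro:
  assumes "\<And>A. is_lub R ((\<lambda>v. v A) ` S) (x A)" shows "is_lub (pw R) S x"
  using assms unfolding is_lub_def pw_def by fastforce

lemma pw_glb_intro:
  assumes "\<And>A. is_glb R ((\<lambda>v. v A) ` S) (x A)" shows "is_glb (pw R) S x"
  using assms unfolding is_glb_def pw_def by fastforce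

lemma pw_complete:
  fixes R :: "'b \<Rightarrow> 'b \<Rightarrow> bool"
  assumes po: "partial_order_rel R" and cR: "complete_rel R" shows "complete_rel (pw R)"
  unfolding complete_rel_def
proof
  fix S :: "('a \<Rightarrow> 'b) set"
  have "is_lub (pw R) S (\<lambda>A. lub R ((\<lambda>v. v A) ` S))"
    by (rule pw_lub_intro) (rule lub_is[OF po cR])
  moreover have "is_glb (pw R) S (\<lambda>A. glb R ((\<lambda>v. v A) ` S))"
    by (rule pw_glb_intro) (rule glb_is[OF po cR])
  ultimately show "(\<exists>x. is_lub (pw R) S x) \<and> (\<exists>x. is_glb (pw R) S x)" by blast
qed

lemma pw_lub_dest:
  assumes po: "partial_order_rel R" and cR: "complete_rel R" and h: "is_lub (pw R) S x"
  shows "is_lub R ((\<lambda>v. v A) ` S) (x A)"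
proof -
  define z where "z = (\<lambda>A. lub R ((\<lambda>v. v A) ` S))"
  have "is_lub (pw R) S z" unfolding z_def
    by (rule pw_lub_intro) (rule lub_is[OF po cR])
  then have "x = z" using lub_unique[OF pw_po[OF po] h] by simp
  then show ?thesis unfolding z_def using lub_is[OF po cR] by simp
qed

lemma pw_supmono:
  fixes R K :: "'b \<Rightarrow> 'b \<Rightarrow> bool"
  assumes po: "partial_order_rel R" and cR: "complete_rel R" and sm: "supmono R K"
  shows "supmono (pw R) (pw K)"
  unfolding supmono_def
proof (intro allI impI)
  fix S :: "(('a \<Rightarrow> 'b) \<times> ('a \<Rightarrow> 'b)) set" and x y
  assume hS: "\<forall>(a,b)\<in>S. pw K a b" and hx: "is_lub (pw R) (fst`S) x" and hy: "is_lub (pw R) (snd`S) y"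
  show "pw K x y" unfolding pw_def
  proof
    fix A
    define PA where "PA = (\<lambda>p. (fst p A, snd p A)) ` S"
    have e1: "fst ` PA = (\<lambda>v. v A) ` fst ` S" unfolding PA_def image_image by simp
    have e2: "snd ` PA = (\<lambda>v. v A) ` snd ` S" unfolding PA_def image_image by simp
    have "\<forall>(a,b)\<in>PA. K a b" using hS unfolding PA_def pw_def by auto
    moreover have "is_lub R (fst`PA) (x A)" unfolding e1 by (rule pw_lub_dest[OF po cR hx])
    moreover have "is_lub R (snd`PA) (y A)" unfolding e2 by (rule pw_lub_dest[OF po cR hy])
    ultimately show "K (x A) (y A)" using sm unfolding supmono_def by blast
  qed
qed

lemma supmono_tk: assumes "bilattice B" shows "supmono (tle B) (kle B)"
  unfolding supmono_def
proof (intro allI impI)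
  fix S x y assume h: "\<forall>(a,b)\<in>S. kle B a b" "is_lub (tle B) (fst`S) x" "is_lub (tle B) (snd`S) y"
  have "x = tJoin B (fst`S)" "y = tJoin B (snd`S)" unfolding tJoin_def
    using lub_eq[OF bl(1,3)[OF assms]] h(2,3) by simp_all
  then show "kle B x y" using bl(5)[OF assms] h(1) unfolding inf_interlaced_def by blast
qed

lemma supmono_tk_flip: assumes "bilattice B" shows "supmono (\<lambda>a b. tle B b a) (kle B)"
  unfolding supmono_def is_lub_flip
proof (intro allI impI)
  fix S x y assume h: "\<forall>(a,b)\<in>S. kle B a b" "is_glb (tle B) (fst`S) x" "is_glb (tle B) (snd`S) y"
  have "x = tMeet B (fst`S)" "y = tMeet B (snd`S)" unfolding tMeet_def
    using glb_eq[OF bl(1,3)[OF assms]] h(2,3) by simp_all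
  then show "kle B x y" using bl(5)[OF assms] h(1) unfolding inf_interlaced_def by blast
qed

lemma supmono_kk: assumes "bilattice B" shows "supmono (kle B) (kle B)"
  unfolding supmono_def using lub_mono_pairs[OF bl(2)[OF assms]] by blast

lemma Psi_mono_gen:
  fixes P :: "('p, 'f, 'v, 'b) prog"
  assumes fp: "fitting_program P" and om: "opsmono R B" and rf: "\<And>a. R a a"
    and hx: "pw R x y" and hv: "\<And>A. R (bneg B (v A)) (bneg B (w A))"
    and hd: "R (dval B \<alpha>) (dval B \<alpha>')"
  shows "pw R (Psi B \<alpha> P x v) (Psi B \<alpha>' P y w)"
  unfolding pw_def
proof
  fix A
  have cj: "\<And>(e :: 'v \<Rightarrow> 'f gterm) (\<phi> :: ('p, 'f, 'v, 'b) fml). R (cj_eval B x v e \<phi>) (cj_eval B y w e \<phi>)"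
    by (rule cj_mono_gen[OF om rf _ hv]) (use hx in \<open>unfold pw_def, blast\<close>)
  show "R (Psi B \<alpha> P x v A) (Psi B \<alpha>' P y w A)"
    by (rule Psi_rel[where R=R and v=x and w=v and v'=y and w'=w, OF fp cj hd])
qed

lemma bU_least: assumes "bilattice B" shows "kle B (bU B) a"
proof -
  have "is_glb (kle B) UNIV (bU B)" unfolding bU_def kMeet_def by (rule glb_is[OF bl(2,4)[OF assms]])
  then show ?thesis unfolding is_glb_def by simp
qed

lemma gfp_as_lfp: "greatest_fp (vtle B) f = least_fp (pw (\<lambda>a b. tle B b a)) f"
  by (simp add: greatest_fp_def least_fp_def vtle_def pw_def)

theorem theorem5:
  fixes B :: "'b bilat" and P :: "('p, 'f, 'v, 'b) prog"
  assumes "bilattice B" and "fitting_program P"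
  shows "vkle B (FixU B DU P) (FixU B DF P) \<and> vkle B (FixU B DU P) (FixU B DT P)"
proof -
  note bla = assms(1) and fp = assms(2)
  define Vt :: "('p, 'f, 'b) valuation \<Rightarrow> ('p, 'f, 'b) valuation \<Rightarrow> bool" where "Vt = pw (tle B)"
  define Vf :: "('p, 'f, 'b) valuation \<Rightarrow> ('p, 'f, 'b) valuation \<Rightarrow> bool" where "Vf = pw (\<lambda>a b. tle B b a)"
  define Vk :: "('p, 'f, 'b) valuation \<Rightarrow> ('p, 'f, 'b) valuation \<Rightarrow> bool" where "Vk = pw (kle B)"
  have poT: "partial_order_rel (tle B)" and poK: "partial_order_rel (kle B)"
    and cT: "complete_rel (tle B)" and cK: "complete_rel (kle B)" using bl[OF bla] by simp_all
  have poF: "partial_order_rel (\<lambda>a b. tle B b a)" by (rule po_flip[OF poT])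
  have cF: "complete_rel (\<lambda>a b. tle B b a)" by (rule complete_flip[OF cT])
  have pVt: "partial_order_rel Vt" "complete_rel Vt" unfolding Vt_def
    using pw_po[OF poT] pw_complete[OF poT cT] by simp_all
  have pVf: "partial_order_rel Vf" "complete_rel Vf" unfolding Vf_def
    using pw_po[OF poF] pw_complete[OF poF cF] by simp_all
  have pVk: "partial_order_rel Vk" "complete_rel Vk" unfolding Vk_def
    using pw_po[OF poK] pw_complete[OF poK cK] by simp_all
  have smT: "supmono Vt Vk" unfolding Vt_def Vk_def by (rule pw_supmono[OF poT cT supmono_tk[OF bla]])
  have smF: "supmono Vf Vk" unfolding Vf_def Vk_def by (rule pw_supmono[OF poF cF supmono_tk_flip[OF bla]])
  have smK: "supmono Vk Vk" unfolding Vk_def by (rule pw_supmono[OF poK cK supmono_kk[OF bla]])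
  have reT: "\<And>a. tle B a a" using po_refl[OF poT] .
  have reK: "\<And>a. kle B a a" using po_refl[OF poK] .
  have negK: "\<And>a b. kle B a b \<Longrightarrow> kle B (bneg B a) (bneg B b)"
    using bl(6)[OF bla] unfolding is_negation_def by blast
  have omT: "opsmono (tle B) B" by (rule opsmono_t[OF bla])
  have omK: "opsmono (kle B) B" by (rule opsmono_k[OF bla])
  have omF: "opsmono (\<lambda>a b. tle B b a) B" by (rule opsmono_flip[OF omT])
  have mT: "Vt (Psi B \<alpha> P x v) (Psi B \<alpha> P y v)" if "Vt x y" for \<alpha> x y v
    using Psi_mono_gen[OF fp omT reT, of x y v v \<alpha> \<alpha>] that reT unfolding Vt_def by blast
  have mF: "Vf (Psi B \<alpha> P x v) (Psi B \<alpha> P y v)" if "Vf x y" for \<alpha> x y v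
    using Psi_mono_gen[OF fp omF reT, of x y v v \<alpha> \<alpha>] that reT unfolding Vf_def by blast
  have mK: "Vk (Psi B \<alpha> P x v) (Psi B \<alpha>' P y w)"
    if "Vk x y" "Vk v w" "kle B (dval B \<alpha>) (dval B \<alpha>')" for \<alpha> \<alpha>' x y v w
  proof -
    have "\<And>A. kle B (bneg B (v A)) (bneg B (w A))" using that(2) negK unfolding Vk_def pw_def by blast
    then show ?thesis using Psi_mono_gen[OF fp omK reK, of x y v w \<alpha> \<alpha>'] that(1,3) unfolding Vk_def by blast
  qed
  have eF: "Psi' B DF P v = least_fp Vt (\<lambda>x. Psi B DF P x v)" for v
    unfolding Vt_def by (simp add: vtle_pw)
  have eT: "Psi' B DT P v = least_fp Vf (\<lambda>x. Psi B DT P x v)" for v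
    unfolding Vf_def by (simp add: gfp_as_lfp)
  have eU: "Psi' B DU P v = least_fp Vk (\<lambda>x. Psi B DU P x v)" for v
    unfolding Vk_def by (simp add: vkle_pw)
  have eFix: "FixU B \<alpha> P = least_fp Vk (Psi' B \<alpha> P)" for \<alpha>
    unfolding Vk_def FixU_def by (simp add: vkle_pw)
  have MF: "Vk (Psi' B DF P v) (Psi' B DF P w)" if "Vk v w" for v w
    unfolding eF
    by (rule lfp_pair[OF pVt smT]) (auto intro: mT mK that reK)
  have MT: "Vk (Psi' B DT P v) (Psi' B DT P w)" if "Vk v w" for v w
    unfolding eT
    by (rule lfp_pair[OF pVf smF]) (auto intro: mF mK that reK)
  have MU: "Vk (Psi' B DU P v) (Psi' B DU P w)" if "Vk v w" for v w
    unfolding eU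
    by (rule lfp_pair[OF pVk smK]) (auto intro: mK that reK po_refl[OF pVk(1)])
  have KF: "Psi' B DF P (FixU B DF P) = FixU B DF P"
    using KT[OF pVk, of "Psi' B DF P", OF MF] unfolding eFix by simp
  have KT': "Psi' B DT P (FixU B DT P) = FixU B DT P"
    using KT[OF pVk, of "Psi' B DT P", OF MT] unfolding eFix by simp
  have KU: "\<And>y. Vk (Psi' B DU P y) y \<Longrightarrow> Vk (FixU B DU P) y"
    using KT[OF pVk, of "Psi' B DU P", OF MU] unfolding eFix by simp
  have UF: "Vk (Psi' B DU P v) (Psi' B DF P v)" for v
  proof -
    define y where "y = Psi' B DF P v"
    have fy: "Psi B DF P y v = y" unfolding y_def eF
      using KT[OF pVt, of "\<lambda>x. Psi B DF P x v"] mT by blast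
    have "Vk (Psi B DU P y v) (Psi B DF P y v)"
      by (rule mK) (simp_all add: bU_least[OF bla] po_refl[OF pVk(1)])
    then have "Vk (Psi B DU P y v) y" using fy by simp
    then show ?thesis unfolding y_def[symmetric] eU
      using KT[OF pVk, of "\<lambda>x. Psi B DU P x v"] mK reK po_refl[OF pVk(1)] by blast
  qed
  have UT: "Vk (Psi' B DU P v) (Psi' B DT P v)" for v
  proof -
    define y where "y = Psi' B DT P v"
    have fy: "Psi B DT P y v = y" unfolding y_def eT
      using KT[OF pVf, of "\<lambda>x. Psi B DT P x v"] mF by blast
    have "Vk (Psi B DU P y v) (Psi B DT P y v)"
      by (rule mK) (simp_all add: bU_least[OF bla] po_refl[OF pVk(1)])
    then have "Vk (Psi B DU P y v) y" using fy by simp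
    then show ?thesis unfolding y_def[symmetric] eU
      using KT[OF pVk, of "\<lambda>x. Psi B DU P x v"] mK reK po_refl[OF pVk(1)] by blast
  qed
  have "Vk (Psi' B DU P (FixU B DF P)) (FixU B DF P)" using UF[of "FixU B DF P"] KF by simp
  then have r1: "Vk (FixU B DU P) (FixU B DF P)" by (rule KU)
  have "Vk (Psi' B DU P (FixU B DT P)) (FixU B DT P)" using UT[of "FixU B DT P"] KT' by simp
  then have r2: "Vk (FixU B DU P) (FixU B DT P)" by (rule KU)
  show ?thesis using r1 r2 unfolding Vk_def vkle_pw by simp
qed

end
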